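(* Let $\mathcal{F}=\{f_1,\dots,f_n\}$ be a basis for $\mathbb{R}^n$ and $\mathcal{F}^*=\{f_1^*,\dots,f_n^*\}$ its dual basis. Then: (i) If $M$ is a $k$-dimensional PR-subspace with respect to $\mathcal{F}$, then $|\mathrm{supp}_{\mathcal{F}^*}(x)|\ge k$ for every nonzero $x\in M$; consequently $M$ is maximal if there exists $x\in M$ with $|\mathrm{supp}_{\mathcal{F}^*}(x)|=k$. (ii) For every positive integer $k\le[(n+1)/2]$ and every vector $x\in\mathbb{R}^n$ with $|\mathrm{supp}_{\mathcal{F}^*}(x)|=k$, there exists a $k$-dimensional maximal PR-subspace $M$ with respect to $\mathcal{F}$ such that $x\in M$. (iii) If $k<[(n+1)/2]$ and $M$ is a $k$-dimensional PR-subspace with respect to $\mathcal{F}$, then $M$ is maximal if and only if there exists $x\in M$ with $|\mathrm{supp}_{\mathcal{F}^*}(x)|=k$.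
   Context: The dual basis $\{f_i^*\}$ is the unique basis with $\langle f_i^*,f_j\rangle=\delta_{ij}$. For $x=\sum_{i=1}^n c_if_i^*$, $\mathrm{supp}_{\mathcal{F}^*}(x)=\{i:c_i\neq0\}$. $[a]$ is the integer part of $a$. A subspace $M$ is a PR-subspace with respect to $\mathcal{F}$ if $\{P_Mf_i\}_{i=1}^n$ (with $P_M$ the orthogonal projection onto $M$) spans $M$ and whenever $x,y\in M$ satisfy $|\langle x,P_Mf_i\rangle|=|\langle y,P_Mf_i\rangle|$ for all $i$, then $x=\pm y$; it is maximal if it is not a proper subspace of another PR-subspace with respect to $\mathcal{F}$. *)

theory Defs
  imports "HOL-Analysis.Analysis"
begin

text \<open>A basis f_1..f_n of R^n, indexed by the finite type 'n (n = CARD('n)).\<close>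
definition is_basis :: "('n::finite \<Rightarrow> real^'n) \<Rightarrow> bool" where
  "is_basis f \<longleftrightarrow> inj f \<and> independent (range f) \<and> span (range f) = UNIV"

definition is_dual_basis :: "('n::finite \<Rightarrow> real^'n) \<Rightarrow> ('n \<Rightarrow> real^'n) \<Rightarrow> bool" where
  "is_dual_basis f fs \<longleftrightarrow> (\<forall>i j. inner (fs i) (f j) = (if i = j then 1 else 0))"

definition coeffs :: "('n::finite \<Rightarrow> real^'n) \<Rightarrow> real^'n \<Rightarrow> 'n \<Rightarrow> real" where
  "coeffs fs x = (THE c. x = (\<Sum>i\<in>UNIV. c i *\<^sub>R fs i))"

definition supp_dual :: "('n::finite \<Rightarrow> real^'n) \<Rightarrow> real^'n \<Rightarrow> 'n set" where
  "supp_dual fs x = {i. coeffs fs x i \<noteq> 0}"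

definition orth_proj :: "(real^'n::finite) set \<Rightarrow> real^'n \<Rightarrow> real^'n" where
  "orth_proj M v = (THE p. p \<in> M \<and> (\<forall>m\<in>M. inner (v - p) m = 0))"

definition PR_subspace :: "('n::finite \<Rightarrow> real^'n) \<Rightarrow> (real^'n) set \<Rightarrow> bool" where
  "PR_subspace f M \<longleftrightarrow> subspace M \<and>
     span (range (\<lambda>i. orth_proj M (f i))) = M \<and>
     (\<forall>x\<in>M. \<forall>y\<in>M. (\<forall>i. \<bar>inner x (orth_proj M (f i))\<bar> = \<bar>inner y (orth_proj M (f i))\<bar>)
        \<longrightarrow> x = y \<or> x = - y)"

definition maximal_PR_subspace :: "('n::finite \<Rightarrow> real^'n) \<Rightarrow> (real^'n) set \<Rightarrow> bool" where
  "maximal_PR_subspace f M \<longleftrightarrow> PR_subspace f M \<and>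
     \<not> (\<exists>M'. PR_subspace f M' \<and> M \<subset> M')"

end

theory Submission
  imports Defs
begin

lemma orth_proj_prop:
  fixes M :: "(real^'n::finite) set"
  assumes "subspace M"
  shows "orth_proj M v \<in> M \<and> (\<forall>m\<in>M. inner (v - orth_proj M v) m = 0)"
proof -
  obtain y z where y: "y \<in> span M" and z: "\<And>w. w \<in> span M \<Longrightarrow> orthogonal z w" and e: "v = y + z"
    using orthogonal_subspace_decomp_exists by blast
  have yM: "y \<in> M" using y assms using span_eq_iff by blast
  have P: "y \<in> M \<and> (\<forall>m\<in>M. inner (v - y) m = 0)"
    using yM z e by (simp add: orthogonal_def span_base)
  have U: "p = y" if "p \<in> M \<and> (\<forall>m\<in>M. inner (v - p) m = 0)" for p
  proof -
    have d: "p - y \<in> M" using that yM assms by (simp add: subspace_diff)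
    have "inner (v - y) (p - y) - inner (v - p) (p - y) = 0" using that P d by simp
    hence "inner (p - y) (p - y) = 0" by (simp add: inner_diff_left inner_diff_right inner_commute)
    thus ?thesis by simp
  qed
  have "orth_proj M v = y" unfolding orth_proj_def
    using P U by (rule the_equality)
  thus ?thesis using P by simp
qed

lemma inner_orth_proj:
  fixes M :: "(real^'n::finite) set"
  assumes "subspace M" "x \<in> M"
  shows "inner x (orth_proj M v) = inner x v"
proof -
  have "inner (v - orth_proj M v) x = 0" using orth_proj_prop[OF assms(1)] assms(2) by blast
  thus ?thesis by (simp add: inner_diff_left inner_diff_right inner_commute)
qed

lemma orth_all_zero:
  fixes f :: "'n::finite \<Rightarrow> real^'n"
  assumes "is_basis f" "\<forall>i. inner z (f i) = 0"
  shows "z = 0"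
proof -
  have "orthogonal z w" if "w \<in> span (range f)" for w
    using orthogonal_to_span[OF that, of z] assms(2) by (auto simp: orthogonal_def)
  hence "orthogonal z z" using assms(1) by (simp add: is_basis_def)
  thus ?thesis by (simp add: orthogonal_def)
qed

lemma span_proj:
  fixes f :: "'n::finite \<Rightarrow> real^'n"
  assumes "is_basis f" "subspace M"
  shows "span (range (\<lambda>i. orth_proj M (f i))) = M"
proof
  show "span (range (\<lambda>i. orth_proj M (f i))) \<subseteq> M"
    using orth_proj_prop[OF assms(2)] assms(2) by (intro span_minimal) auto
next
  show "M \<subseteq> span (range (\<lambda>i. orth_proj M (f i)))"
  proof
    fix m assume m: "m \<in> M"
    let ?S = "range (\<lambda>i. orth_proj M (f i))"
    obtain y z where y: "y \<in> span ?S" and z: "\<And>w. w \<in> span ?S \<Longrightarrow> orthogonal z w" and e: "m = y + z"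
      using orthogonal_subspace_decomp_exists by blast
    have sub: "span ?S \<subseteq> M"
      using orth_proj_prop[OF assms(2)] assms(2) by (intro span_minimal) auto
    have zM: "z \<in> M" using e m y sub assms(2)
      by (metis add_diff_cancel_left' subsetD subspace_diff)
    have "inner z (f i) = 0" for i
    proof -
      have "orthogonal z (orth_proj M (f i))" using z by (simp add: span_base)
      thus ?thesis using inner_orth_proj[OF assms(2) zM] by (simp add: orthogonal_def)
    qed
    hence "z = 0" using orth_all_zero[OF assms(1)] by blast
    thus "m \<in> span ?S" using e y by simp
  qed
qed

lemma PR_iff:
  fixes f :: "'n::finite \<Rightarrow> real^'n"
  assumes "is_basis f" "subspace M"
  shows "PR_subspace f M \<longleftrightarrow>
    (\<forall>u\<in>M. \<forall>v\<in>M. (\<forall>i. inner u (f i) = 0 \<or> inner v (f i) = 0) \<longrightarrow> u = 0 \<or> v = 0)"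
proof -
  have ip: "inner x (orth_proj M (f i)) = inner x (f i)" if "x \<in> M" for x i
    using inner_orth_proj[OF assms(2) that] .
  show ?thesis
  proof
    assume PR: "PR_subspace f M"
    show "\<forall>u\<in>M. \<forall>v\<in>M. (\<forall>i. inner u (f i) = 0 \<or> inner v (f i) = 0) \<longrightarrow> u = 0 \<or> v = 0"
    proof (intro ballI impI)
      fix u v assume uM: "u \<in> M" and vM: "v \<in> M" and d: "\<forall>i. inner u (f i) = 0 \<or> inner v (f i) = 0"
      have a: "u + v \<in> M" "u - v \<in> M" using uM vM assms(2) by (auto intro: subspace_add subspace_diff)
      have "\<bar>inner (u+v) (orth_proj M (f i))\<bar> = \<bar>inner (u-v) (orth_proj M (f i))\<bar>" for i
        unfolding ip[OF a(1)] ip[OF a(2)] using d[rule_format, of i] by (auto simp: inner_add_left inner_diff_left)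
      hence "u + v = u - v \<or> u + v = -(u - v)" using PR a unfolding PR_subspace_def by blast
      moreover have "v + v = (u + v) - (u - v)" "u + u = (u + v) + (u - v)" by (simp_all add: algebra_simps)
      ultimately have "v + v = 0 \<or> u + u = 0" by auto
      hence "2 *\<^sub>R v = 0 \<or> 2 *\<^sub>R u = 0" by (simp add: scaleR_2)
      thus "u = 0 \<or> v = 0" by auto
    qed
  next
    assume H: "\<forall>u\<in>M. \<forall>v\<in>M. (\<forall>i. inner u (f i) = 0 \<or> inner v (f i) = 0) \<longrightarrow> u = 0 \<or> v = 0"
    have "x = y \<or> x = - y" if xM: "x \<in> M" and yM: "y \<in> M"
      and eq: "\<forall>i. \<bar>inner x (orth_proj M (f i))\<bar> = \<bar>inner y (orth_proj M (f i))\<bar>" for x y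
    proof -
      have a: "x + y \<in> M" "x - y \<in> M" using xM yM assms(2) by (auto intro: subspace_add subspace_diff)
      have "inner (x+y) (f i) = 0 \<or> inner (x-y) (f i) = 0" for i
      proof -
        have "\<bar>inner x (f i)\<bar> = \<bar>inner y (f i)\<bar>" using eq ip[OF xM] ip[OF yM] by metis
        thus ?thesis by (auto simp: inner_add_left inner_diff_left abs_if split: if_splits)
      qed
      hence "x + y = 0 \<or> x - y = 0" using H a by blast
      thus ?thesis by (auto simp: algebra_simps add_eq_0_iff)
    qed
    thus "PR_subspace f M" unfolding PR_subspace_def using assms span_proj by blast
  qed
qed

lemma supp_dual_eq:
  fixes f fs :: "'n::finite \<Rightarrow> real^'n"
  assumes "is_basis f" "is_dual_basis f fs"
  shows "supp_dual fs x = {i. inner x (f i) \<noteq> 0}"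
proof -
  let ?c = "\<lambda>i. inner x (f i)"
  have ip: "inner (\<Sum>i\<in>UNIV. c i *\<^sub>R fs i) (f j) = c j" for c j
  proof -
    have "inner (\<Sum>i\<in>UNIV. c i *\<^sub>R fs i) (f j) = (\<Sum>i\<in>UNIV. if i = j then c j else 0)"
      unfolding inner_sum_left by (rule sum.cong) (use assms(2) in \<open>auto simp: is_dual_basis_def\<close>)
    thus ?thesis by simp
  qed
  have "x - (\<Sum>i\<in>UNIV. ?c i *\<^sub>R fs i) = 0"
    by (rule orth_all_zero[OF assms(1)]) (simp add: inner_diff_left ip)
  hence ex: "x = (\<Sum>i\<in>UNIV. ?c i *\<^sub>R fs i)" by simp
  have "coeffs fs x = ?c" unfolding coeffs_def
  proof (rule the_equality)
    show "x = (\<Sum>i\<in>UNIV. ?c i *\<^sub>R fs i)" by (rule ex)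
    fix c assume "x = (\<Sum>i\<in>UNIV. c i *\<^sub>R fs i)"
    thus "c = ?c" using ip by (auto intro!: ext)
  qed
  thus ?thesis by (simp add: supp_dual_def)
qed

definition zset :: "('n::finite \<Rightarrow> real^'n) \<Rightarrow> 'n set \<Rightarrow> (real^'n) set" where
  "zset f T = {u. \<forall>i\<in>T. inner u (f i) = 0}"

lemma subspace_zset: "subspace (zset f T)"
  unfolding zset_def subspace_def by (auto simp: inner_add_left)

lemma dim_zset:
  fixes f :: "'n::finite \<Rightarrow> real^'n"
  assumes "is_basis f"
  shows "dim (zset f T) + card T = CARD('n)"
proof -
  have eq: "zset f T = {y \<in> UNIV. \<forall>x \<in> span (f ` T). orthogonal x y}"
  proof -
    have "(\<forall>x \<in> span (f ` T). orthogonal x y) \<longleftrightarrow> (\<forall>i\<in>T. inner y (f i) = 0)" for y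
    proof
      assume "\<forall>x \<in> span (f ` T). orthogonal x y"
      thus "\<forall>i\<in>T. inner y (f i) = 0" by (auto simp: orthogonal_def inner_commute span_base)
    next
      assume h: "\<forall>i\<in>T. inner y (f i) = 0"
      show "\<forall>x \<in> span (f ` T). orthogonal x y"
      proof
        fix x assume "x \<in> span (f ` T)"
        hence "orthogonal y x" by (rule orthogonal_to_span) (use h in \<open>auto simp: orthogonal_def\<close>)
        thus "orthogonal x y" by (simp add: orthogonal_commute)
      qed
    qed
    thus ?thesis unfolding zset_def by auto
  qed
  have ind: "independent (f ` T)"
    using assms unfolding is_basis_def by (meson image_mono independent_mono subset_UNIV)
  have inj: "inj_on f T" using assms unfolding is_basis_def by (meson inj_on_subset subset_UNIV)
  have "dim (span (f ` T)) = card T"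
    using dim_span_eq_card_independent[OF ind] card_image[OF inj] by simp
  moreover have "dim {y \<in> UNIV. \<forall>x \<in> span (f ` T). orthogonal x y} + dim (span (f ` T)) = dim (UNIV :: (real^'n) set)"
    by (rule dim_subspace_orthogonal_to_vectors) (auto simp: subspace_span)
  ultimately show ?thesis using eq by simp
qed

lemma avoid_subspaces:
  fixes \<A> :: "(real^'n::finite) set set"
  assumes "finite \<A>" "\<And>A. A \<in> \<A> \<Longrightarrow> dim A < CARD('n)"
  shows "\<exists>v. \<forall>A\<in>\<A>. v \<notin> A"
proof -
  have "negligible (\<Union>\<A>)"
    using assms by (intro negligible_Union negligible_lowdim) auto
  hence "\<Union>\<A> \<noteq> UNIV" using non_negligible_UNIV by metis
  thus ?thesis by blast
qed

lemma dim_sum_le: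
  fixes C Z :: "(real^'n::finite) set"
  assumes "subspace C" "subspace Z"
  shows "dim {x + y |x y. x \<in> C \<and> y \<in> Z} \<le> dim C + dim Z"
  using dim_sums_Int[OF assms] by linarith

lemma insert_avoid:
  fixes C Z :: "(real^'n::finite) set"
  assumes "subspace C" "subspace Z" "v \<notin> {x + y |x y. x \<in> C \<and> y \<in> Z}"
    "w \<in> span (insert v C)" "w \<in> Z"
  shows "w \<in> C"
proof -
  obtain a where a: "w - a *\<^sub>R v \<in> span C" using span_breakdown_eq assms(4) by blast
  hence aC: "w - a *\<^sub>R v \<in> C" using assms(1) span_eq_iff by blast
  show ?thesis
  proof (cases "a = 0")
    case True thus ?thesis using aC by simp
  next
    case False
    have "v = (- (1/a)) *\<^sub>R (w - a *\<^sub>R v) + (1/a) *\<^sub>R w"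
      using False by (simp add: scaleR_diff_right)
    moreover have "(- (1/a)) *\<^sub>R (w - a *\<^sub>R v) \<in> C" using subspace_scale[OF assms(1) aC, of "-(1/a)"] .
    moreover have "(1/a) *\<^sub>R w \<in> Z" using assms(2,5) by (simp add: subspace_scale)
    ultimately have "v \<in> {x + y |x y. x \<in> C \<and> y \<in> Z}" by blast
    thus ?thesis using assms(3) by blast
  qed
qed

lemma part1:
  fixes f :: "'n::finite \<Rightarrow> real^'n"
  assumes "is_basis f" "PR_subspace f M" "x \<in> M" "x \<noteq> 0"
  shows "card {i. inner x (f i) \<noteq> 0} \<ge> dim M"
proof (rule ccontr)
  let ?S = "{i. inner x (f i) \<noteq> 0}"
  assume "\<not> card ?S \<ge> dim M"
  hence lt: "card ?S < dim M" by simp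
  have sM: "subspace M" using assms(2) unfolding PR_subspace_def by blast
  have "dim {a + b |a b. a \<in> M \<and> b \<in> zset f ?S} + dim (M \<inter> zset f ?S) = dim M + dim (zset f ?S)"
    by (rule dim_sums_Int[OF sM subspace_zset])
  moreover have "dim {a + b |a b. a \<in> M \<and> b \<in> zset f ?S} \<le> CARD('n)" by (rule dim_subset_UNIV_cart)
  moreover have "dim (zset f ?S) + card ?S = CARD('n)" by (rule dim_zset[OF assms(1)])
  ultimately have "dim (M \<inter> zset f ?S) > 0" using lt by linarith
  hence "\<not> (M \<inter> zset f ?S) \<subseteq> {0}" using dim_eq_0 by (metis less_irrefl)
  then obtain v where v: "v \<in> M" "v \<in> zset f ?S" "v \<noteq> 0" by blast
  have "\<forall>i. inner x (f i) = 0 \<or> inner v (f i) = 0" using v(2) unfolding zset_def by auto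
  thus False using PR_iff[OF assms(1) sM] assms(2,3,4) v by blast
qed

lemma maximal_crit:
  fixes f :: "'n::finite \<Rightarrow> real^'n"
  assumes "is_basis f" "PR_subspace f M" "x \<in> M" "card {i. inner x (f i) \<noteq> 0} = dim M" "dim M \<ge> 1"
  shows "maximal_PR_subspace f M"
proof -
  have x0: "x \<noteq> 0"
  proof
    assume "x = 0"
    hence "card {i. inner x (f i) \<noteq> 0} = 0" by simp
    thus False using assms(4,5) by linarith
  qed
  have sM: "subspace M" using assms(2) unfolding PR_subspace_def by blast
  have "\<not> (PR_subspace f M' \<and> M \<subset> M')" for M'
  proof
    assume h: "PR_subspace f M' \<and> M \<subset> M'"
    have sM': "subspace M'" using h unfolding PR_subspace_def by blast
    have "span M = M" "span M' = M'" using sM sM' span_eq_iff by blast+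
    hence "span M \<subset> span M'" using h by (simp only:)
    hence "dim M < dim M'" by (rule dim_psubset)
    moreover have "card {i. inner x (f i) \<noteq> 0} \<ge> dim M'"
      using part1[OF assms(1)] h assms(3) x0 by blast
    ultimately show False using assms(4) by linarith
  qed
  thus ?thesis unfolding maximal_PR_subspace_def using assms(2) by blast
qed

lemma build:
  fixes f :: "'n::finite \<Rightarrow> real^'n"
  assumes "is_basis f" "x \<noteq> 0"
  shows "1 \<le> m \<Longrightarrow> m \<le> CARD('n) \<Longrightarrow> \<exists>C. subspace C \<and> dim C = m \<and> x \<in> C \<and>
      (\<forall>T. card T \<ge> m \<longrightarrow> C \<inter> zset f T \<subseteq> span {x})"
proof (induction m)
  case 0 thus ?case by simp
next
  case (Suc m)
  show ?case
  proof (cases "m = 0")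
    case True
    have "dim (span {x}) = 1" using assms(2) by (simp add: dim_insert)
    moreover have "x \<in> span {x}" by (rule span_base) simp
    moreover have "subspace (span {x})" by (rule subspace_span)
    ultimately show ?thesis using True by (intro exI[of _ "span {x}"]) simp
  next
    case False
    have "1 \<le> m" "m \<le> CARD('n)" using False Suc.prems by auto
    from Suc.IH[OF this] obtain C where C: "subspace C" "dim C = m" "x \<in> C"
      "\<forall>T. card T \<ge> m \<longrightarrow> C \<inter> zset f T \<subseteq> span {x}" by (elim exE conjE) (intro that)
    let ?Sum = "\<lambda>T. {a + b |a b. a \<in> C \<and> b \<in> zset f T}"
    have "\<exists>v. \<forall>A\<in>?Sum ` {T. card T \<ge> Suc m}. v \<notin> A"
    proof (rule avoid_subspaces)
      fix A assume "A \<in> ?Sum ` {T. card T \<ge> Suc m}"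
      then obtain T where T: "card T \<ge> Suc m" "A = ?Sum T" by (elim imageE) simp
      have "dim A \<le> dim C + dim (zset f T)" using T(2) dim_sum_le[OF C(1) subspace_zset] by simp
      moreover have "dim (zset f T) + card T = CARD('n)" by (rule dim_zset[OF assms(1)])
      ultimately show "dim A < CARD('n)" using T(1) C(2) by linarith
    next
      show "finite (?Sum ` {T. card T \<ge> Suc m})"
        by (rule finite_imageI) (rule finite_subset[OF subset_UNIV], rule finite)
    qed
    then obtain v where v0: "\<forall>A\<in>?Sum ` {T. card T \<ge> Suc m}. v \<notin> A" by (elim exE)
    have v: "v \<notin> ?Sum T" if "card T \<ge> Suc m" for T using v0 that by (simp only: ball_simps image_iff Bex_def mem_Collect_eq) (metis (mono_tags))
    have "card (UNIV::'n set) \<ge> Suc m" using Suc.prems(2) by simp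
    hence "v \<notin> ?Sum UNIV" by (rule v)
    moreover have "C \<subseteq> ?Sum UNIV"
    proof
      fix c assume c: "c \<in> C"
      have "c = c + 0" by simp
      moreover have "(0::real^'n) \<in> zset f UNIV" by (simp add: zset_def)
      ultimately show "c \<in> ?Sum UNIV" using c by blast
    qed
    ultimately have vC: "v \<notin> C" by blast
    have spC: "span C = C" using C(1) by simp
    have vsC: "v \<notin> span C" by (metis spC vC)
    have "dim (span (insert v C)) = dim (insert v C)" by (rule dim_span)
    also have "\<dots> = Suc m" using dim_insert[of v C] vsC C(2) by simp
    finally have "dim (span (insert v C)) = Suc m" .
    moreover have "x \<in> span (insert v C)" using C(3) by (simp add: span_base)
    moreover have "span (insert v C) \<inter> zset f T \<subseteq> span {x}" if "card T \<ge> Suc m" for T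
    proof
      fix w assume w: "w \<in> span (insert v C) \<inter> zset f T"
      have "w \<in> C" using insert_avoid[OF C(1) subspace_zset v[OF that]] w by blast
      have "m \<le> card T" using that by simp
      thus "w \<in> span {x}" using C(4) w \<open>w \<in> C\<close> by blast
    qed
    ultimately show ?thesis using subspace_span[of "insert v C"]
      by (intro exI[of _ "span (insert v C)"]) simp
  qed
qed

lemma card_compl_add: "card (- (S::'n::finite set)) + card S = CARD('n)"
proof -
  have "UNIV = (- S) \<union> S" by blast
  hence "CARD('n) = card ((- S) \<union> S)" by simp
  also have "\<dots> = card (- S) + card S" by (rule card_Un_disjoint) auto
  finally show ?thesis by simp
qed

lemma disj_helper:
  fixes f :: "'n::finite \<Rightarrow> real^'n"
  assumes C: "\<forall>T. card T \<ge> k \<longrightarrow> C \<inter> zset f T \<subseteq> span {x}"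
    and sx: "card {i. inner x (f i) \<noteq> 0} = k" "0 < k"
    and uv: "u \<in> C" "v \<in> C" "\<forall>i. inner u (f i) = 0 \<or> inner v (f i) = 0" "u \<noteq> 0" "v \<noteq> 0"
    and cu: "card {i. inner u (f i) = 0} \<ge> k"
  shows False
proof -
  have "u \<in> zset f {i. inner u (f i) = 0}" by (simp add: zset_def)
  hence "u \<in> span {x}" using C cu uv(1) by blast
  then obtain a where a: "u = a *\<^sub>R x" by (auto simp: span_singleton)
  have a0: "a \<noteq> 0" using a uv(4) by auto
  have sub: "{i. inner x (f i) \<noteq> 0} \<subseteq> {i. inner v (f i) = 0}"
  proof
    fix i assume "i \<in> {i. inner x (f i) \<noteq> 0}"
    hence "inner u (f i) \<noteq> 0" using a a0 by simp
    thus "i \<in> {i. inner v (f i) = 0}" using uv(3) by auto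
  qed
  have "card {i. inner v (f i) = 0} \<ge> k" using card_mono[OF finite sub] sx(1) by simp
  moreover have "v \<in> zset f {i. inner v (f i) = 0}" by (simp add: zset_def)
  ultimately have "v \<in> span {x}" using C uv(2) by blast
  then obtain b where b: "v = b *\<^sub>R x" by (auto simp: span_singleton)
  have b0: "b \<noteq> 0" using b uv(5) by auto
  have "{i. inner x (f i) \<noteq> 0} \<noteq> {}" using sx by (metis card.empty less_irrefl)
  then obtain i where i: "inner x (f i) \<noteq> 0" by blast
  have "inner u (f i) \<noteq> 0" "inner v (f i) \<noteq> 0" using a a0 b b0 i by simp_all
  thus False using uv(3) by blast
qed

lemma part2:
  fixes f :: "'n::finite \<Rightarrow> real^'n"
  assumes fb: "is_basis f" and k: "0 < k" "2 * k \<le> CARD('n) + 1"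
    and sx: "card {i. inner x (f i) \<noteq> 0} = k"
  shows "\<exists>M. subspace M \<and> dim M = k \<and> maximal_PR_subspace f M \<and> x \<in> M"
proof -
  have x0: "x \<noteq> 0"
  proof
    assume "x = 0"
    hence "card {i. inner x (f i) \<noteq> 0} = 0" by simp
    thus False using sx k by linarith
  qed
  have kn: "k \<le> CARD('n)" using card_mono[OF finite subset_UNIV, of "{i. inner x (f i) \<noteq> 0}"] sx by simp
  obtain C where C: "subspace C" "dim C = k" "x \<in> C"
      "\<forall>T. card T \<ge> k \<longrightarrow> C \<inter> zset f T \<subseteq> span {x}"
  proof -
    have "1 \<le> k" using k by simp
    from build[OF fb x0 this kn] show ?thesis using that by blast
  qed
  have "\<forall>u\<in>C. \<forall>v\<in>C. (\<forall>i. inner u (f i) = 0 \<or> inner v (f i) = 0) \<longrightarrow> u = 0 \<or> v = 0"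
  proof (intro ballI impI)
    fix u v assume u: "u \<in> C" and v: "v \<in> C" and d: "\<forall>i. inner u (f i) = 0 \<or> inner v (f i) = 0"
    show "u = 0 \<or> v = 0"
    proof (rule ccontr)
      assume nz: "\<not> (u = 0 \<or> v = 0)"
      have "{i. inner u (f i) = 0} \<union> {i. inner v (f i) = 0} = UNIV" using d by blast
      hence "CARD('n) \<le> card {i. inner u (f i) = 0} + card {i. inner v (f i) = 0}"
        by (metis card_Un_le)
      hence "card {i. inner u (f i) = 0} \<ge> k \<or> card {i. inner v (f i) = 0} \<ge> k" using k by linarith
      moreover have d': "\<forall>i. inner v (f i) = 0 \<or> inner u (f i) = 0" using d by blast
      ultimately show False
        using disj_helper[OF C(4) sx k(1) u v d] disj_helper[OF C(4) sx k(1) v u d'] nz by blast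
    qed
  qed
  hence PR: "PR_subspace f C" using PR_iff[OF fb C(1)] by blast
  have "maximal_PR_subspace f C" by (rule maximal_crit[OF fb PR C(3)]) (use sx C(2) k in simp_all)
  thus ?thesis using C by blast
qed

lemma zset_UNIV:
  fixes f :: "'n::finite \<Rightarrow> real^'n"
  assumes "is_basis f"
  shows "zset f UNIV = {0}"
  using orth_all_zero[OF assms] by (auto simp: zset_def)

lemma part3:
  fixes f :: "'n::finite \<Rightarrow> real^'n"
  assumes fb: "is_basis f" and PR: "PR_subspace f M" and dM: "dim M = k" and k: "k \<ge> 1" "2 * k + 1 \<le> CARD('n)"
    and nx: "\<not> (\<exists>x\<in>M. card {i. inner x (f i) \<noteq> 0} = k)"
  shows "\<not> maximal_PR_subspace f M"
proof -
  have sM: "subspace M" using PR unfolding PR_subspace_def by blast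
  have big: "card {i. inner y (f i) \<noteq> 0} \<ge> k + 1" if "y \<in> M" "y \<noteq> 0" for y
  proof -
    have "card {i. inner y (f i) \<noteq> 0} \<ge> dim M" by (rule part1[OF fb PR that])
    moreover have "card {i. inner y (f i) \<noteq> 0} \<noteq> k" using nx that(1) by blast
    ultimately show ?thesis using dM by linarith
  qed
  have PRM: "\<forall>u\<in>M. \<forall>v\<in>M. (\<forall>i. inner u (f i) = 0 \<or> inner v (f i) = 0) \<longrightarrow> u = 0 \<or> v = 0"
    using PR_iff[OF fb sM] PR by blast
  let ?Sum = "\<lambda>T. {a + b |a b. a \<in> M \<and> b \<in> zset f T}"
  let ?I = "{T. card T > k \<and> M \<inter> zset f T \<subseteq> {0}}"
  have "\<exists>v. \<forall>A\<in>?Sum ` ?I. v \<notin> A"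
  proof (rule avoid_subspaces)
    show "finite (?Sum ` ?I)"
      by (rule finite_imageI) (rule finite_subset[OF subset_UNIV], rule finite)
  next
    fix A assume "A \<in> ?Sum ` ?I"
    then obtain T where T: "card T > k" "A = ?Sum T" by (elim imageE CollectE conjE) (rule that)
    have "dim A \<le> dim M + dim (zset f T)" using T(2) dim_sum_le[OF sM subspace_zset] by simp
    moreover have "dim (zset f T) + card T = CARD('n)" by (rule dim_zset[OF fb])
    ultimately show "dim A < CARD('n)" using T(1) dM by linarith
  qed
  then obtain v where v0: "\<forall>A\<in>?Sum ` ?I. v \<notin> A" by (elim exE)
  have v: "v \<notin> ?Sum T" if "card T > k" "M \<inter> zset f T \<subseteq> {0}" for T
  proof -
    have "T \<in> ?I" using that by simp
    hence "?Sum T \<in> ?Sum ` ?I" by (rule imageI)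
    from bspec[OF v0 this] show ?thesis .
  qed
  let ?M' = "span (insert v M)"
  have "card (UNIV::'n set) > k" using k by simp
  moreover have "M \<inter> zset f UNIV \<subseteq> {0}" using zset_UNIV[OF fb] by blast
  ultimately have vU: "v \<notin> ?Sum UNIV" by (rule v)
  have "M \<subseteq> ?Sum UNIV"
  proof
    fix c assume c: "c \<in> M"
    have "c = c + 0" by simp
    moreover have "(0::real^'n) \<in> zset f UNIV" by (simp add: zset_def)
    ultimately show "c \<in> ?Sum UNIV" using c by blast
  qed
  hence vM: "v \<notin> M" using vU by (rule contra_subsetD)
  have sub: "M \<subset> ?M'"
  proof -
    have s1: "M \<subseteq> ?M'" by (rule subset_trans[OF subset_insertI span_superset])
    have "v \<in> ?M'" by (simp add: span_base)
    hence s2: "M \<noteq> ?M'" using vM by (intro notI) simp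
    show ?thesis by (rule psubsetI[OF s1 s2])
  qed
  have key: "\<exists>T. (T = S \<or> T = - S) \<and> card T > k \<and> M \<inter> zset f T \<subseteq> {0}" for S
  proof (cases "M \<inter> zset f S \<subseteq> {0}")
    case True
    show ?thesis
    proof (cases "card S > k")
      case True2: True
      show ?thesis using True True2 by (intro exI[of _ S]) simp
    next
      case False
      have "card (- S) > k" using card_compl_add[of S] False k by linarith
      moreover have "M \<inter> zset f (- S) \<subseteq> {0}"
      proof
        fix z assume z: "z \<in> M \<inter> zset f (- S)"
        show "z \<in> {0}"
        proof (rule ccontr)
          assume "z \<notin> {0}"
          hence "card {i. inner z (f i) \<noteq> 0} \<ge> k + 1" using big z by blast
          moreover have "card {i. inner z (f i) \<noteq> 0} \<le> card S"
            by (rule card_mono[OF finite]) (use z in \<open>auto simp: zset_def\<close>)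
          ultimately have "card S \<ge> k + 1" by linarith
          thus False using False by linarith
        qed
      qed
      ultimately show ?thesis by (intro exI[of _ "- S"]) simp
    qed
  next
    case False
    then obtain y where y: "y \<in> M" "y \<in> zset f S" "y \<noteq> 0" by blast
    have "{i. inner y (f i) \<noteq> 0} \<subseteq> - S" using y(2) by (auto simp: zset_def)
    hence "card {i. inner y (f i) \<noteq> 0} \<le> card (- S)" by (rule card_mono[OF finite])
    hence "card (- S) \<ge> k + 1" using big[OF y(1,3)] by linarith
    moreover have "M \<inter> zset f (- S) \<subseteq> {0}"
    proof
      fix z assume z: "z \<in> M \<inter> zset f (- S)"
      have "\<forall>i. inner y (f i) = 0 \<or> inner z (f i) = 0" using y(2) z by (auto simp: zset_def)
      moreover have "y \<in> M" "z \<in> M" using y(1) z by auto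
      ultimately have "y = 0 \<or> z = 0" using PRM by blast
      hence "z = 0" using y(3) by blast
      thus "z \<in> {0}" by simp
    qed
    ultimately show ?thesis by (intro exI[of _ "- S"]) simp
  qed
  have "\<forall>u\<in>?M'. \<forall>w\<in>?M'. (\<forall>i. inner u (f i) = 0 \<or> inner w (f i) = 0) \<longrightarrow> u = 0 \<or> w = 0"
  proof (intro ballI impI)
    fix u w assume u: "u \<in> ?M'" and w: "w \<in> ?M'" and d: "\<forall>i. inner u (f i) = 0 \<or> inner w (f i) = 0"
    let ?S = "{i. inner u (f i) = 0}"
    have uS: "u \<in> zset f ?S" by (simp add: zset_def)
    have wS: "w \<in> zset f (- ?S)" using d by (auto simp: zset_def)
    obtain T where T: "T = ?S \<or> T = - ?S" "card T > k" "M \<inter> zset f T \<subseteq> {0}" using key[of ?S] by (elim exE conjE) (rule that)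
    have av: "z \<in> M" if "z \<in> ?M'" "z \<in> zset f T" for z
      by (rule insert_avoid[OF sM subspace_zset v[OF T(2,3)] that])
    show "u = 0 \<or> w = 0"
    proof (cases "T = ?S")
      case True
      hence "u \<in> zset f T" using uS by simp
      hence "u \<in> M \<inter> zset f T" using av[OF u] by simp
      hence "u = 0" using T(3) by blast
      thus ?thesis by simp
    next
      case False
      hence "T = - ?S" using T(1) by simp
      hence "w \<in> zset f T" using wS by simp
      hence "w \<in> M \<inter> zset f T" using av[OF w] by simp
      hence "w = 0" using T(3) by blast
      thus ?thesis by simp
    qed
  qed
  hence PRM': "PR_subspace f ?M'" by (rule iffD2[OF PR_iff[OF fb subspace_span[of "insert v M"]]])
  show ?thesis
  proof
    assume "maximal_PR_subspace f M"
    hence "\<not> (\<exists>M'. PR_subspace f M' \<and> M \<subset> M')" by (simp add: maximal_PR_subspace_def)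
    moreover have "\<exists>M'. PR_subspace f M' \<and> M \<subset> M'" using PRM' sub by (intro exI[of _ ?M'] conjI)
    ultimately show False by (rule notE)
  qed
qed

theorem theorem4p9:
  fixes f fs :: "'n::finite \<Rightarrow> real^'n"
  assumes "is_basis f" and "is_dual_basis f fs"
  shows
    "(\<forall>k M. k \<ge> 1 \<and> PR_subspace f M \<and> dim M = k \<longrightarrow>
        (\<forall>x\<in>M. x \<noteq> 0 \<longrightarrow> card (supp_dual fs x) \<ge> k) \<and>
        ((\<exists>x\<in>M. card (supp_dual fs x) = k) \<longrightarrow> maximal_PR_subspace f M))
   \<and> (\<forall>k x. 0 < k \<and> k \<le> (CARD('n) + 1) div 2 \<and> card (supp_dual fs x) = k \<longrightarrow>
        (\<exists>M. subspace M \<and> dim M = k \<and> maximal_PR_subspace f M \<and> x \<in> M))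
   \<and> (\<forall>k M. k \<ge> 1 \<and> k < (CARD('n) + 1) div 2 \<and> PR_subspace f M \<and> dim M = k \<longrightarrow>
        (maximal_PR_subspace f M \<longleftrightarrow> (\<exists>x\<in>M. card (supp_dual fs x) = k)))"
proof -
  have sd: "supp_dual fs x = {i. inner x (f i) \<noteq> 0}" for x
    by (rule supp_dual_eq[OF assms])
  have A: "(\<forall>x\<in>M. x \<noteq> 0 \<longrightarrow> card (supp_dual fs x) \<ge> k) \<and>
        ((\<exists>x\<in>M. card (supp_dual fs x) = k) \<longrightarrow> maximal_PR_subspace f M)"
    if "k \<ge> 1" "PR_subspace f M" "dim M = k" for k M
  proof (intro conjI ballI impI)
    fix x assume "x \<in> M" "x \<noteq> 0"
    thus "card (supp_dual fs x) \<ge> k" unfolding sd using part1[OF assms(1) that(2)] that(3) by blast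
  next
    assume "\<exists>x\<in>M. card (supp_dual fs x) = k"
    then obtain x where "x \<in> M" "card {i. inner x (f i) \<noteq> 0} = k" unfolding sd by blast
    thus "maximal_PR_subspace f M" using maximal_crit[OF assms(1) that(2)] that by simp
  qed
  have B: "\<exists>M. subspace M \<and> dim M = k \<and> maximal_PR_subspace f M \<and> x \<in> M"
    if "0 < k" "k \<le> (CARD('n) + 1) div 2" "card (supp_dual fs x) = k" for k x
  proof (rule part2[OF assms(1) that(1)])
    show "2 * k \<le> CARD('n) + 1" using that(2) by linarith
    show "card {i. inner x (f i) \<noteq> 0} = k" using that(3) unfolding sd .
  qed
  have C: "maximal_PR_subspace f M \<longleftrightarrow> (\<exists>x\<in>M. card (supp_dual fs x) = k)"
    if "k \<ge> 1" "k < (CARD('n) + 1) div 2" "PR_subspace f M" "dim M = k" for k M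
  proof
    assume mx: "maximal_PR_subspace f M"
    show "\<exists>x\<in>M. card (supp_dual fs x) = k"
    proof (rule ccontr)
      assume "\<not> (\<exists>x\<in>M. card (supp_dual fs x) = k)"
      hence "\<not> (\<exists>x\<in>M. card {i. inner x (f i) \<noteq> 0} = k)" unfolding sd .
      moreover have "2 * k + 1 \<le> CARD('n)" using that(2) by linarith
      ultimately have "\<not> maximal_PR_subspace f M" using part3[OF assms(1) that(3,4,1)] by blast
      thus False using mx by blast
    qed
  next
    assume "\<exists>x\<in>M. card (supp_dual fs x) = k"
    thus "maximal_PR_subspace f M" using A[OF that(1,3,4)] by blast
  qed
  show ?thesis using A B C by blast
qed

end
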